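(* Let $q\neq 0$ and let $\gamma\colon I\to M^3$ be a curve parametrized by arc-length which is not a geodesic. (1) If $M^3=\mathbb R^3$ and $\gamma$ is a conformal trajectory of the radial vector field $V(x,y,z)=x\partial_x+y\partial_y+z\partial_z$, then the curvature of $\gamma$ is constant and its torsion is $\tau(s)=q\langle\gamma(s),\gamma'(s)\rangle$. (2) If $M^3=\mathbb S^3$, $\vec a\in\mathbb R^4\setminus\{0\}$ and $\gamma$ is a conformal trajectory of $V(p)=\vec a-\langle\vec a,p\rangle p$, then the curvature of $\gamma$ is constant and its torsion is $\tau(s)=q\langle\vec a,\gamma'(s)\rangle$. (3) If $M^3=\mathbb H^3$, $\vec a\in\mathbb R^4\setminus\{0\}$ and $\gamma$ is a conformal trajectory of $V(p)=\vec a+\langle\vec a,p\rangle p$, then the curvature of $\gamma$ is constant and its torsion is $\tau(s)=q\langle\vec a,\gamma'(s)\rangle$.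
   Context: $\mathbb R^3$ carries the Euclidean metric and the usual cross product. $\mathbb S^3=\{p\in\mathbb R^4:|p|=1\}$ with the induced Euclidean metric; $\mathbb H^3=\{p\in\mathbb R^4:\langle p,p\rangle=-1,\ t>0\}$ where $\langle\cdot,\cdot\rangle=dx^2+dy^2+dz^2-dt^2$ is the Lorentzian metric on $\mathbb R^4$ (in case (3) all inner products, including $\langle\vec a,\cdot\rangle$, are Lorentzian). In $\mathbb S^3$ and $\mathbb H^3$ the cross product of $u,v\in T_pM^3$ is the unique $u\times v\in T_pM^3$ with $\langle u\times v,w\rangle=\det(u,v,w,p)$ for all $w\in T_pM^3$ (determinant of the $4\times4$ matrix with these columns). The given fields $V$ are conformal vector fields. For a fixed real $q\neq0$, a conformal trajectory of $V$ is a regular curve with $\nabla_{\gamma'}\gamma'=q\,V\times\gamma'$, $\nabla$ the Levi-Civita connection of $M^3$. Frenet frame of a non-geodesic unit-speed curve: $T=\gamma'$, $\nabla_TT=\kappa N$ with $\kappa>0$, $B=T\times N$, $\nabla_TN=-\kappa T+\tau B$, $\nabla_TB=-\tau N$; $\kappa$ is the curvature and $\tau$ the torsion. *)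

theory Defs
  imports "HOL-Analysis.Analysis"
begin

text \<open>Points of R^4 are written (x,y,z,t) = (p$1, p$2, p$3, p$4).\<close>

definition lor :: "real^4 \<Rightarrow> real^4 \<Rightarrow> real" where
  "lor u v = u$1 * v$1 + u$2 * v$2 + u$3 * v$3 - u$4 * v$4"

definition S3 :: "(real^4) set" where
  "S3 = {p. norm p = 1}"

definition H3 :: "(real^4) set" where
  "H3 = {p. lor p p = -1 \<and> p$4 > 0}"

definition det4 :: "real^4 \<Rightarrow> real^4 \<Rightarrow> real^4 \<Rightarrow> real^4 \<Rightarrow> real" where
  "det4 u v w p = det ((\<chi> i j. if j = 1 then u$i else if j = 2 then v$i
                                 else if j = 3 then w$i else p$i) :: real^4^4)"

definition crossS :: "real^4 \<Rightarrow> real^4 \<Rightarrow> real^4 \<Rightarrow> real^4" where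
  "crossS p u v = (THE x. x \<bullet> p = 0 \<and> (\<forall>w. w \<bullet> p = 0 \<longrightarrow> x \<bullet> w = det4 u v w p))"

definition crossH :: "real^4 \<Rightarrow> real^4 \<Rightarrow> real^4 \<Rightarrow> real^4" where
  "crossH p u v = (THE x. lor x p = 0 \<and> (\<forall>w. lor w p = 0 \<longrightarrow> lor x w = det4 u v w p))"

definition smooth_curve_on :: "real set \<Rightarrow> (real \<Rightarrow> 'a::real_normed_vector) \<Rightarrow> bool" where
  "smooth_curve_on I \<gamma> \<longleftrightarrow> (\<exists>D. D 0 = \<gamma> \<and>
     (\<forall>n. \<forall>s\<in>I. (D n has_vector_derivative D (Suc n) s) (at s)))"

definition tang :: "(real \<Rightarrow> 'a::real_normed_vector) \<Rightarrow> real \<Rightarrow> 'a" where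
  "tang \<gamma> s = vector_derivative \<gamma> (at s)"

text \<open>Levi-Civita covariant derivative along the curve gamma of a vector field X along gamma
  (tangential projection of the ambient derivative, Gauss formula).\<close>
definition covD_R3 :: "(real \<Rightarrow> real^3) \<Rightarrow> real \<Rightarrow> real^3" where
  "covD_R3 X s = vector_derivative X (at s)"

definition covD_S3 :: "(real \<Rightarrow> real^4) \<Rightarrow> (real \<Rightarrow> real^4) \<Rightarrow> real \<Rightarrow> real^4" where
  "covD_S3 \<gamma> X s = (let D = vector_derivative X (at s) in D - (D \<bullet> \<gamma> s) *\<^sub>R \<gamma> s)"

definition covD_H3 :: "(real \<Rightarrow> real^4) \<Rightarrow> (real \<Rightarrow> real^4) \<Rightarrow> real \<Rightarrow> real^4" where
  "covD_H3 \<gamma> X s = (let D = vector_derivative X (at s) in D + lor D (\<gamma> s) *\<^sub>R \<gamma> s)"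

definition curv_R3 :: "(real \<Rightarrow> real^3) \<Rightarrow> real \<Rightarrow> real" where
  "curv_R3 \<gamma> s = norm (covD_R3 (tang \<gamma>) s)"

definition normal_R3 :: "(real \<Rightarrow> real^3) \<Rightarrow> real \<Rightarrow> real^3" where
  "normal_R3 \<gamma> s = (1 / curv_R3 \<gamma> s) *\<^sub>R covD_R3 (tang \<gamma>) s"

definition binormal_R3 :: "(real \<Rightarrow> real^3) \<Rightarrow> real \<Rightarrow> real^3" where
  "binormal_R3 \<gamma> s = cross3 (tang \<gamma> s) (normal_R3 \<gamma> s)"

definition tors_R3 :: "(real \<Rightarrow> real^3) \<Rightarrow> real \<Rightarrow> real" where
  "tors_R3 \<gamma> s = covD_R3 (normal_R3 \<gamma>) s \<bullet> binormal_R3 \<gamma> s"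

definition curv_S3 :: "(real \<Rightarrow> real^4) \<Rightarrow> real \<Rightarrow> real" where
  "curv_S3 \<gamma> s = norm (covD_S3 \<gamma> (tang \<gamma>) s)"

definition normal_S3 :: "(real \<Rightarrow> real^4) \<Rightarrow> real \<Rightarrow> real^4" where
  "normal_S3 \<gamma> s = (1 / curv_S3 \<gamma> s) *\<^sub>R covD_S3 \<gamma> (tang \<gamma>) s"

definition binormal_S3 :: "(real \<Rightarrow> real^4) \<Rightarrow> real \<Rightarrow> real^4" where
  "binormal_S3 \<gamma> s = crossS (\<gamma> s) (tang \<gamma> s) (normal_S3 \<gamma> s)"

definition tors_S3 :: "(real \<Rightarrow> real^4) \<Rightarrow> real \<Rightarrow> real" where
  "tors_S3 \<gamma> s = covD_S3 \<gamma> (normal_S3 \<gamma>) s \<bullet> binormal_S3 \<gamma> s"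

definition curv_H3 :: "(real \<Rightarrow> real^4) \<Rightarrow> real \<Rightarrow> real" where
  "curv_H3 \<gamma> s = sqrt (lor (covD_H3 \<gamma> (tang \<gamma>) s) (covD_H3 \<gamma> (tang \<gamma>) s))"

definition normal_H3 :: "(real \<Rightarrow> real^4) \<Rightarrow> real \<Rightarrow> real^4" where
  "normal_H3 \<gamma> s = (1 / curv_H3 \<gamma> s) *\<^sub>R covD_H3 \<gamma> (tang \<gamma>) s"

definition binormal_H3 :: "(real \<Rightarrow> real^4) \<Rightarrow> real \<Rightarrow> real^4" where
  "binormal_H3 \<gamma> s = crossH (\<gamma> s) (tang \<gamma> s) (normal_H3 \<gamma> s)"

definition tors_H3 :: "(real \<Rightarrow> real^4) \<Rightarrow> real \<Rightarrow> real" where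
  "tors_H3 \<gamma> s = lor (covD_H3 \<gamma> (normal_H3 \<gamma>) s) (binormal_H3 \<gamma> s)"

definition unit_speed_R3 :: "real set \<Rightarrow> (real \<Rightarrow> real^3) \<Rightarrow> bool" where
  "unit_speed_R3 I \<gamma> \<longleftrightarrow> smooth_curve_on I \<gamma> \<and> (\<forall>s\<in>I. norm (tang \<gamma> s) = 1)"

definition unit_speed_S3 :: "real set \<Rightarrow> (real \<Rightarrow> real^4) \<Rightarrow> bool" where
  "unit_speed_S3 I \<gamma> \<longleftrightarrow> smooth_curve_on I \<gamma> \<and> (\<forall>s\<in>I. \<gamma> s \<in> S3 \<and> norm (tang \<gamma> s) = 1)"

definition unit_speed_H3 :: "real set \<Rightarrow> (real \<Rightarrow> real^4) \<Rightarrow> bool" where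
  "unit_speed_H3 I \<gamma> \<longleftrightarrow> smooth_curve_on I \<gamma> \<and> (\<forall>s\<in>I. \<gamma> s \<in> H3 \<and> lor (tang \<gamma> s) (tang \<gamma> s) = 1)"

definition conf_traj_R3 :: "real \<Rightarrow> (real^3 \<Rightarrow> real^3) \<Rightarrow> real set \<Rightarrow> (real \<Rightarrow> real^3) \<Rightarrow> bool" where
  "conf_traj_R3 q V I \<gamma> \<longleftrightarrow>
     (\<forall>s\<in>I. covD_R3 (tang \<gamma>) s = q *\<^sub>R cross3 (V (\<gamma> s)) (tang \<gamma> s))"

definition conf_traj_S3 :: "real \<Rightarrow> (real^4 \<Rightarrow> real^4) \<Rightarrow> real set \<Rightarrow> (real \<Rightarrow> real^4) \<Rightarrow> bool" where
  "conf_traj_S3 q V I \<gamma> \<longleftrightarrow>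
     (\<forall>s\<in>I. covD_S3 \<gamma> (tang \<gamma>) s = q *\<^sub>R crossS (\<gamma> s) (V (\<gamma> s)) (tang \<gamma> s))"

definition conf_traj_H3 :: "real \<Rightarrow> (real^4 \<Rightarrow> real^4) \<Rightarrow> real set \<Rightarrow> (real \<Rightarrow> real^4) \<Rightarrow> bool" where
  "conf_traj_H3 q V I \<gamma> \<longleftrightarrow>
     (\<forall>s\<in>I. covD_H3 \<gamma> (tang \<gamma>) s = q *\<^sub>R crossH (\<gamma> s) (V (\<gamma> s)) (tang \<gamma> s))"

end

theory Submission
  imports Defs
begin



lemma det_4:
  "det (A::real^4^4) =
   A$1$1*A$2$2*A$3$3*A$4$4 - A$1$1*A$2$2*A$3$4*A$4$3 - A$1$1*A$2$3*A$3$2*A$4$4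
 + A$1$1*A$2$3*A$3$4*A$4$2 + A$1$1*A$2$4*A$3$2*A$4$3 - A$1$1*A$2$4*A$3$3*A$4$2
 - A$1$2*A$2$1*A$3$3*A$4$4 + A$1$2*A$2$1*A$3$4*A$4$3 + A$1$2*A$2$3*A$3$1*A$4$4
 - A$1$2*A$2$3*A$3$4*A$4$1 - A$1$2*A$2$4*A$3$1*A$4$3 + A$1$2*A$2$4*A$3$3*A$4$1
 + A$1$3*A$2$1*A$3$2*A$4$4 - A$1$3*A$2$1*A$3$4*A$4$2 - A$1$3*A$2$2*A$3$1*A$4$4
 + A$1$3*A$2$2*A$3$4*A$4$1 + A$1$3*A$2$4*A$3$1*A$4$2 - A$1$3*A$2$4*A$3$2*A$4$1
 - A$1$4*A$2$1*A$3$2*A$4$3 + A$1$4*A$2$1*A$3$3*A$4$2 + A$1$4*A$2$2*A$3$1*A$4$3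
 - A$1$4*A$2$2*A$3$3*A$4$1 - A$1$4*A$2$3*A$3$1*A$4$2 + A$1$4*A$2$3*A$3$2*A$4$1"
proof -
  have f1: "finite {2::4, 3, 4}" "1 \<notin> {2::4, 3, 4}" by auto
  have f2: "finite {3::4, 4}" "2 \<notin> {3::4, 4}" by auto
  have f3: "finite {4::4}" "3 \<notin> {4::4}" by auto
  show ?thesis
    unfolding det_def UNIV_4
    unfolding sum_over_permutations_insert[OF f1]
    unfolding sum_over_permutations_insert[OF f2]
    unfolding sum_over_permutations_insert[OF f3]
    unfolding permutes_sing
    by (simp add: sign_swap_id permutation_swap_id permutation_compose sign_compose sign_id swap_id_eq algebra_simps)
qed

lemma det4_expl: "det4 u v w p =
   u$1* v$2*w$3*p$4 - u$1* v$2*w$4*p$3 - u$1* v$3*w$2*p$4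
 + u$1* v$3*w$4*p$2 + u$1* v$4*w$2*p$3 - u$1* v$4*w$3*p$2
 - u$2* v$1*w$3*p$4 + u$2* v$1*w$4*p$3 + u$2* v$3*w$1*p$4
 - u$2* v$3*w$4*p$1 - u$2* v$4*w$1*p$3 + u$2* v$4*w$3*p$1
 + u$3* v$1*w$2*p$4 - u$3* v$1*w$4*p$2 - u$3* v$2*w$1*p$4
 + u$3* v$2*w$4*p$1 + u$3* v$4*w$1*p$2 - u$3* v$4*w$2*p$1
 - u$4* v$1*w$2*p$3 + u$4* v$1*w$3*p$2 + u$4* v$2*w$1*p$3
 - u$4* v$2*w$3*p$1 - u$4* v$3*w$1*p$2 + u$4* v$3*w$2*p$1"
  unfolding det4_def det_4 by simp

definition X4 :: "real^4 \<Rightarrow> real^4 \<Rightarrow> real^4 \<Rightarrow> real^4" where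
  "X4 u v p = (\<chi> i. det4 u v (axis i 1) p)"

definition Jm :: "real^4 \<Rightarrow> real^4" where
  "Jm v = (\<chi> i. if i = 4 then - v$i else v$i)"

lemmas X4_simps = X4_def det4_expl axis_def inner_vec_def sum_4 vec_eq_iff forall_4

lemma X4_inner: "X4 u v p \<bullet> w = det4 u v w p"
  by (simp add: X4_simps) algebra

lemma det4_alt: "det4 u v u p = 0" "det4 u v v p = 0" "det4 u v p p = 0" 
  by (simp_all add: det4_expl)

lemma X4_shift1: "X4 (u + c *\<^sub>R p) v p = X4 u v p" "X4 (u - c *\<^sub>R p) v p = X4 u v p"
  by (simp_all add: X4_simps) algebra+

lemma X4_lin2: "X4 u (x + c *\<^sub>R p) p = X4 u x p" "X4 u (d *\<^sub>R w) p = d *\<^sub>R X4 u w p"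
  by (simp_all add: X4_simps) algebra+

lemma X4_same: "X4 a v v = 0"
  by (simp add: X4_simps)

lemma X4_bilinear: "bilinear (\<lambda>v p. X4 a v p)"
  unfolding bilinear_def linear_iff
  by (simp add: X4_simps; intro conjI allI; algebra)

lemma X4_gram: "X4 u v p \<bullet> X4 u' v' p' =
   (u\<bullet>u')*(v\<bullet>v')*(p\<bullet>p') + (u\<bullet>v')*(v\<bullet>p')*(p\<bullet>u') + (u\<bullet>p')*(v\<bullet>u')*(p\<bullet>v')
 - (u\<bullet>u')*(v\<bullet>p')*(p\<bullet>v') - (u\<bullet>v')*(v\<bullet>u')*(p\<bullet>p') - (u\<bullet>p')*(v\<bullet>v')*(p\<bullet>u')"
  by (simp add: X4_simps) algebra

lemma lor_Jm: "lor (Jm x) w = x \<bullet> w" "lor (Jm x) (Jm y) = lor x y"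
  by (simp_all add: lor_def Jm_def inner_vec_def sum_4)

lemma X4_lgram: "lor (X4 u v p) (X4 u' v' p') =
 - (lor u u'*lor v v'*lor p p' + lor u v'*lor v p'*lor p u' + lor u p'*lor v u'*lor p v'
 - lor u u'*lor v p'*lor p v' - lor u v'*lor v u'*lor p p' - lor u p'*lor v v'*lor p u')"
  by (simp add: X4_simps lor_def) algebra

lemma lor_bilinear: "bilinear lor"
  unfolding bilinear_def linear_iff
  by (simp add: lor_def algebra_simps)

lemma lor_simps:
  "lor (x + y) z = lor x z + lor y z" "lor z (x + y) = lor z x + lor z y"
  "lor (x - y) z = lor x z - lor y z" "lor z (x - y) = lor z x - lor z y"
  "lor (c *\<^sub>R x) z = c * lor x z" "lor z (c *\<^sub>R x) = c * lor z x"
  "lor (-x) z = - lor x z" "lor z (-x) = - lor z x"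
  by (simp_all add: lor_def algebra_simps)

lemma lor_comm: "lor x y = lor y x"
  by (simp add: lor_def algebra_simps)

lemma lor_self_Jm: "lor x (Jm x) = x \<bullet> x"
  by (simp add: lor_def Jm_def inner_vec_def sum_4)

lemma Jm_lin: "Jm (c *\<^sub>R x) = c *\<^sub>R Jm x" "Jm (x + y) = Jm x + Jm y"
  by (simp_all add: Jm_def vec_eq_iff)

lemma Jm_bl: "bounded_linear Jm"
proof -
  have "linear Jm" by (simp add: linear_iff Jm_lin)
  then show ?thesis by (simp add: linear_conv_bounded_linear)
qed

lemma crossS_eq: "crossS p u v = X4 u v p"
  unfolding crossS_def
proof (rule the_equality)
  show "X4 u v p \<bullet> p = 0 \<and> (\<forall>w. w \<bullet> p = 0 \<longrightarrow> X4 u v p \<bullet> w = det4 u v w p)"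
    by (simp add: X4_inner det4_alt)
next
  fix x assume x: "x \<bullet> p = 0 \<and> (\<forall>w. w \<bullet> p = 0 \<longrightarrow> x \<bullet> w = det4 u v w p)"
  define d where "d = x - X4 u v p"
  have "d \<bullet> p = 0" using x by (simp add: d_def inner_diff_left X4_inner det4_alt)
  then have "x \<bullet> d = X4 u v p \<bullet> d" using x by (simp add: X4_inner)
  then have "d \<bullet> d = 0" by (simp add: d_def inner_diff_left)
  then show "x = X4 u v p" by (simp add: d_def)
qed

lemma crossH_eq: assumes "lor p p \<noteq> 0" shows "crossH p u v = Jm (X4 u v p)"
  unfolding crossH_def
proof (rule the_equality)
  show "lor (Jm (X4 u v p)) p = 0 \<and> (\<forall>w. lor w p = 0 \<longrightarrow> lor (Jm (X4 u v p)) w = det4 u v w p)"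
    by (simp add: lor_Jm X4_inner det4_alt)
next
  fix x assume x: "lor x p = 0 \<and> (\<forall>w. lor w p = 0 \<longrightarrow> lor x w = det4 u v w p)"
  define d where "d = x - Jm (X4 u v p)"
  have dp: "lor d p = 0" using x by (simp add: d_def lor_simps lor_Jm X4_inner det4_alt)
  have dw: "lor d w = 0" for w
  proof -
    define w' where "w' = w - (lor w p / lor p p) *\<^sub>R p"
    have "lor w' p = 0" using assms by (simp add: w'_def lor_simps)
    then have "lor x w' = lor (Jm (X4 u v p)) w'" using x by (simp add: lor_Jm X4_inner)
    then have "lor d w' = 0" by (simp add: d_def lor_simps)
    then show ?thesis using dp by (simp add: w'_def lor_simps)
  qed
  have "d \<bullet> d = 0" using dw[of "Jm d"] by (simp add: lor_self_Jm)
  then show "x = Jm (X4 u v p)" by (simp add: d_def)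
qed

lemma spacelike:
  assumes "lor w p = 0" "lor p p = -1" "w \<noteq> 0"
  shows "lor w w > 0"
proof -
  have e1: "w$4 * p$4 = w$1*p$1 + w$2*p$2 + w$3*p$3" using assms(1) by (simp add: lor_def)
  have e2: "p$4 * p$4 = 1 + p$1*p$1 + p$2*p$2 + p$3*p$3" using assms(2) by (simp add: lor_def)
  have cs: "(w$1*p$1 + w$2*p$2 + w$3*p$3)^2 \<le> (w$1^2+w$2^2+w$3^2)*(p$1^2+p$2^2+p$3^2)"
  proof -
    have "(w$1^2+w$2^2+w$3^2)*(p$1^2+p$2^2+p$3^2) - (w$1*p$1 + w$2*p$2 + w$3*p$3)^2
      = (w$1*p$2 - w$2*p$1)^2 + (w$1*p$3 - w$3*p$1)^2 + (w$2*p$3 - w$3*p$2)^2"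
      by algebra
    then show ?thesis by (smt (verit) sum_power2_ge_zero zero_le_power2)
  qed
  define S where "S = w$1^2+w$2^2+w$3^2"
  define P where "P = p$1^2+p$2^2+p$3^2"
  have S0: "S \<ge> 0" "P \<ge> 0" by (simp_all add: S_def P_def)
  have p4: "(p$4)^2 = 1 + P" using e2 by (simp add: P_def power2_eq_square)
  have "(w$4)^2 * (p$4)^2 \<le> S * P" using cs e1 by (simp add: S_def P_def power_mult_distrib[symmetric])
  then have key: "(p$4)^2 * (S - (w$4)^2) \<ge> S" using p4 by (simp add: algebra_simps)
  have lw: "lor w w = S - (w$4)^2" by (simp add: lor_def S_def power2_eq_square)
  show ?thesis
  proof (cases "S = 0")
    case True
    then have "w$1 = 0" "w$2 = 0" "w$3 = 0" unfolding S_def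
      by (smt (verit) zero_le_power2 power_zero_numeral zero_eq_power2)+
    then have "w$4 * p$4 = 0" using e1 by simp
    moreover have "p$4 \<noteq> 0" using p4 S0 by auto
    ultimately have "w$4 = 0" by simp
    then have "w = 0" using \<open>w$1 = 0\<close> \<open>w$2 = 0\<close> \<open>w$3 = 0\<close> by (simp add: vec_eq_iff forall_4)
    then show ?thesis using assms(3) by simp
  next
    case False
    then have "S > 0" using S0 by simp
    then have "(p$4)^2 * (S - (w$4)^2) > 0" using key by linarith
    moreover have "(p$4)^2 > 0" using p4 S0 by simp
    ultimately show ?thesis using lw by (simp add: zero_less_mult_iff)
  qed
qed

lemma smooth_derivs:
  fixes \<gamma> :: "real \<Rightarrow> 'a::real_normed_vector"
  assumes "smooth_curve_on I \<gamma>" "open I" "s \<in> I"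
  shows "(\<gamma> has_vector_derivative tang \<gamma> s) (at s)"
    "(tang \<gamma> has_vector_derivative vector_derivative (tang \<gamma>) (at s)) (at s)"
proof -
  obtain D where D0: "D 0 = \<gamma>" and D: "\<And>n s. s \<in> I \<Longrightarrow> (D n has_vector_derivative D (Suc n) s) (at s)"
    using assms(1) unfolding smooth_curve_on_def by blast
  have tg: "tang \<gamma> x = D 1 x" if "x \<in> I" for x
    using D[OF that, of 0] D0 by (simp add: tang_def vector_derivative_at)
  show "(\<gamma> has_vector_derivative tang \<gamma> s) (at s)"
    using D[OF assms(3), of 0] D0 tg[OF assms(3)] by simp
  have "(tang \<gamma> has_vector_derivative D 2 s) (at s)"
    using has_vector_derivative_transform_within_open[OF D[OF assms(3), of 1] assms(2,3)] tg
    by (simp add: numeral_2_eq_2)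
  then show "(tang \<gamma> has_vector_derivative vector_derivative (tang \<gamma>) (at s)) (at s)"
    by (simp add: vector_derivative_at)
qed

lemma deriv_zero_if_const:
  fixes f :: "real \<Rightarrow> 'a::real_normed_vector"
  assumes "(f has_vector_derivative f') (at s)" "open I" "s \<in> I" "\<And>x. x \<in> I \<Longrightarrow> f x = c"
  shows "f' = 0"
proof -
  have "(f has_vector_derivative 0) (at s)"
    using has_vector_derivative_transform_within_open[OF has_vector_derivative_const[of c] assms(2,3)] assms(4)
    by metis
  then show ?thesis using assms(1) vector_derivative_unique_at by blast
qed

lemma const_if_deriv_zero:
  fixes f :: "real \<Rightarrow> 'a::real_normed_vector"
  assumes "is_interval I" "\<And>s. s \<in> I \<Longrightarrow> (f has_vector_derivative 0) (at s)"
  shows "\<exists>c. \<forall>s\<in>I. f s = c"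
proof -
  have "convex I" using assms(1) by (simp add: is_interval_convex)
  then obtain c where "\<And>x. x \<in> I \<Longrightarrow> f x = c"
    using has_vector_derivative_zero_constant[of I f] assms(2) has_vector_derivative_at_within by blast
  then show ?thesis by blast
qed


bundle my_cross begin
notation cross3 (infixr \<open>\<times>\<close> 80)
end

context includes no set_product_syntax and my_cross begin




lemma cross_bb: "bounded_bilinear (cross3 :: real^3 \<Rightarrow> real^3 \<Rightarrow> real^3)"
  using bilinear_cross bilinear_conv_bounded_bilinear by blast

lemma cross_id: "((g::real^3) \<times> (g \<times> t)) \<bullet> (t \<times> (g \<times> t)) = (g \<bullet> t) * ((g \<times> t) \<bullet> (g \<times> t))"
  by (simp add: cross3_simps)

lemma part1:
  fixes \<gamma> :: "real \<Rightarrow> real^3"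
  assumes q: "q \<noteq> 0" and I: "open I" "is_interval I" and us: "unit_speed_R3 I \<gamma>"
    and ng: "\<not> (\<forall>s\<in>I. covD_R3 (tang \<gamma>) s = 0)" and ct: "conf_traj_R3 q (\<lambda>p. p) I \<gamma>"
  shows "(\<exists>c. \<forall>s\<in>I. curv_R3 \<gamma> s = c) \<and> (\<forall>s\<in>I. tors_R3 \<gamma> s = q * (\<gamma> s \<bullet> tang \<gamma> s))"
proof -
  define T where "T = tang \<gamma>"
  define A where "A s = vector_derivative T (at s)" for s
  define W where "W s = \<gamma> s \<times> T s" for s
  have sm: "smooth_curve_on I \<gamma>" using us by (simp add: unit_speed_R3_def)
  have dg: "(\<gamma> has_vector_derivative T s) (at s)" if "s \<in> I" for s
    using smooth_derivs[OF sm I(1) that] by (simp add: T_def)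
  have dT: "(T has_vector_derivative A s) (at s)" if "s \<in> I" for s
    using smooth_derivs[OF sm I(1) that] by (simp add: T_def A_def)
  have AW: "A s = q *\<^sub>R W s" if "s \<in> I" for s
    using ct that by (simp add: conf_traj_R3_def covD_R3_def A_def T_def W_def)
  have dW: "(W has_vector_derivative q *\<^sub>R (\<gamma> s \<times> W s)) (at s)" if "s \<in> I" for s
  proof -
    have "(W has_vector_derivative (\<gamma> s \<times> A s + T s \<times> T s)) (at s)"
      unfolding W_def by (rule bounded_bilinear.has_vector_derivative[OF cross_bb dg[OF that] dT[OF that]])
    then show ?thesis using AW[OF that] by (simp add: cross_mult_right)
  qed
  have dWW: "((\<lambda>s. W s \<bullet> W s) has_vector_derivative 0) (at s)" if "s \<in> I" for s
  proof -
    have "((\<lambda>s. W s \<bullet> W s) has_vector_derivative (W s \<bullet> q *\<^sub>R (\<gamma> s \<times> W s) + q *\<^sub>R (\<gamma> s \<times> W s) \<bullet> W s)) (at s)"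
      by (rule bounded_bilinear.has_vector_derivative[OF bounded_bilinear_inner dW[OF that] dW[OF that]])
    then show ?thesis by (simp add: dot_cross_self)
  qed
  obtain c where c: "\<And>s. s \<in> I \<Longrightarrow> W s \<bullet> W s = c"
    using const_if_deriv_zero[OF I(2) dWW] by blast
  have curv: "curv_R3 \<gamma> s = \<bar>q\<bar> * sqrt c" if "s \<in> I" for s
    using AW[OF that] c[OF that] by (simp add: curv_R3_def covD_R3_def A_def T_def[symmetric] norm_eq_sqrt_inner) (metis mult.assoc real_sqrt_mult real_sqrt_mult_self)
  obtain s0 where s0: "s0 \<in> I" "A s0 \<noteq> 0" using ng by (auto simp: covD_R3_def A_def T_def)
  define k where "k = \<bar>q\<bar> * sqrt c"
  have "curv_R3 \<gamma> s0 \<noteq> 0" using s0 by (simp add: curv_R3_def covD_R3_def A_def T_def)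
  then have k0: "k \<noteq> 0" using curv[OF s0(1)] by (simp add: k_def)
  have c0: "c > 0" using k0 c[OF s0(1)] by (simp add: k_def) (metis inner_ge_zero order_le_less)
  have kk: "k * k = q * q * c" using c0 by (simp add: k_def algebra_simps abs_mult_self_eq)
  have nrm: "normal_R3 \<gamma> s = (q / k) *\<^sub>R W s" if "s \<in> I" for s
    using AW[OF that] curv[OF that]
    by (simp add: normal_R3_def covD_R3_def A_def T_def[symmetric] k_def)
  have dN: "(normal_R3 \<gamma> has_vector_derivative (q / k) *\<^sub>R (q *\<^sub>R (\<gamma> s \<times> W s))) (at s)" if "s \<in> I" for s
    by (rule has_vector_derivative_transform_within_open[OF bounded_linear.has_vector_derivative[OF bounded_linear_scaleR_right dW[OF that]] I(1) that])
       (simp add: nrm)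
  show ?thesis
  proof
    show "\<exists>c. \<forall>s\<in>I. curv_R3 \<gamma> s = c" using curv by blast
    show "\<forall>s\<in>I. tors_R3 \<gamma> s = q * (\<gamma> s \<bullet> tang \<gamma> s)"
    proof
      fix s assume s: "s \<in> I"
      have "tors_R3 \<gamma> s = ((q / k) *\<^sub>R (q *\<^sub>R (\<gamma> s \<times> W s))) \<bullet> (T s \<times> ((q / k) *\<^sub>R W s))"
        using vector_derivative_at[OF dN[OF s]] nrm[OF s]
        by (simp add: tors_R3_def covD_R3_def binormal_R3_def T_def)
      also have "\<dots> = (q*q*q / (k*k)) * ((\<gamma> s \<times> W s) \<bullet> (T s \<times> W s))"
        by (simp add: cross_mult_right)
      also have "\<dots> = (q*q*q / (k*k)) * ((\<gamma> s \<bullet> T s) * c)"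
        using cross_id[of "\<gamma> s" "T s"] c[OF s] by (simp add: W_def)
      also have "\<dots> = q * (\<gamma> s \<bullet> T s)" using kk c0 q by (simp add: field_simps)
      finally show "tors_R3 \<gamma> s = q * (\<gamma> s \<bullet> tang \<gamma> s)" by (simp add: T_def)
    qed
  qed
qed


end


lemma X4_bb: "bounded_bilinear (\<lambda>v p. X4 a v p)"
  using X4_bilinear bilinear_conv_bounded_bilinear by blast

lemma X4_lin3: "X4 u (x - p) p = X4 u x p"
  by (simp add: X4_simps algebra_simps)

lemma part2:
  fixes \<gamma> :: "real \<Rightarrow> real^4" and a :: "real^4"
  assumes q: "q \<noteq> 0" and I: "open I" "is_interval I" and us: "unit_speed_S3 I \<gamma>"
    and ng: "\<not> (\<forall>s\<in>I. covD_S3 \<gamma> (tang \<gamma>) s = 0)"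
    and ct: "conf_traj_S3 q (\<lambda>p. a - (a \<bullet> p) *\<^sub>R p) I \<gamma>"
  shows "(\<exists>c. \<forall>s\<in>I. curv_S3 \<gamma> s = c) \<and> (\<forall>s\<in>I. tors_S3 \<gamma> s = q * (a \<bullet> tang \<gamma> s))"
proof -
  define T where "T = tang \<gamma>"
  define A where "A s = vector_derivative T (at s)" for s
  define W where "W s = X4 a (T s) (\<gamma> s)" for s
  have sm: "smooth_curve_on I \<gamma>" using us by (simp add: unit_speed_S3_def)
  have dg: "(\<gamma> has_vector_derivative T s) (at s)" if "s \<in> I" for s
    using smooth_derivs[OF sm I(1) that] by (simp add: T_def)
  have dT: "(T has_vector_derivative A s) (at s)" if "s \<in> I" for s
    using smooth_derivs[OF sm I(1) that] by (simp add: T_def A_def)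
  have gg: "\<gamma> s \<bullet> \<gamma> s = 1" if "s \<in> I" for s
    using us that by (simp add: unit_speed_S3_def S3_def norm_eq_1)
  have TT: "T s \<bullet> T s = 1" if "s \<in> I" for s
    using us that by (simp add: unit_speed_S3_def T_def norm_eq_1)
  have gT: "\<gamma> s \<bullet> T s = 0" if "s \<in> I" for s
  proof -
    have "((\<lambda>s. \<gamma> s \<bullet> \<gamma> s) has_vector_derivative (\<gamma> s \<bullet> T s + T s \<bullet> \<gamma> s)) (at s)"
      by (rule bounded_bilinear.has_vector_derivative[OF bounded_bilinear_inner dg[OF that] dg[OF that]])
    from deriv_zero_if_const[OF this I(1) that gg] show ?thesis by (simp add: inner_commute)
  qed
  have gA: "\<gamma> s \<bullet> A s = -1" if "s \<in> I" for s
  proof -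
    have "((\<lambda>s. \<gamma> s \<bullet> T s) has_vector_derivative (\<gamma> s \<bullet> A s + T s \<bullet> T s)) (at s)"
      by (rule bounded_bilinear.has_vector_derivative[OF bounded_bilinear_inner dg[OF that] dT[OF that]])
    from deriv_zero_if_const[OF this I(1) that gT] show ?thesis using TT[OF that] by simp
  qed
  have cov: "covD_S3 \<gamma> T s = A s + \<gamma> s" if "s \<in> I" for s
    using gA[OF that] by (simp add: covD_S3_def A_def inner_commute)
  have AW: "A s + \<gamma> s = q *\<^sub>R W s" if "s \<in> I" for s
    using ct that cov[OF that] by (simp add: conf_traj_S3_def T_def W_def crossS_eq X4_shift1)
  have AW2: "A s = q *\<^sub>R W s + (-1) *\<^sub>R \<gamma> s" if "s \<in> I" for s
    using AW[OF that] by (simp add: algebra_simps)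
  have dW: "(W has_vector_derivative q *\<^sub>R X4 a (W s) (\<gamma> s)) (at s)" if "s \<in> I" for s
  proof -
    have "(W has_vector_derivative (X4 a (T s) (T s) + X4 a (A s) (\<gamma> s))) (at s)"
      unfolding W_def by (rule bounded_bilinear.has_vector_derivative[OF X4_bb dT[OF that] dg[OF that]])
    then show ?thesis using AW2[OF that] by (simp add: X4_same X4_lin2 X4_lin3)
  qed
  have WX: "W s \<bullet> X4 a (W s) (\<gamma> s) = 0" for s
    by (simp add: inner_commute[of "W s"] X4_inner det4_alt)
  have dWW: "((\<lambda>s. W s \<bullet> W s) has_vector_derivative 0) (at s)" if "s \<in> I" for s
  proof -
    have "((\<lambda>s. W s \<bullet> W s) has_vector_derivative (W s \<bullet> q *\<^sub>R X4 a (W s) (\<gamma> s) + q *\<^sub>R X4 a (W s) (\<gamma> s) \<bullet> W s)) (at s)"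
      by (rule bounded_bilinear.has_vector_derivative[OF bounded_bilinear_inner dW[OF that] dW[OF that]])
    then show ?thesis using WX[of s] by (simp add: inner_commute[of _ "W s"])
  qed
  obtain c where c: "\<And>s. s \<in> I \<Longrightarrow> W s \<bullet> W s = c"
    using const_if_deriv_zero[OF I(2) dWW] by blast
  have curv: "curv_S3 \<gamma> s = \<bar>q\<bar> * sqrt c" if "s \<in> I" for s
    using AW[OF that] c[OF that] cov[OF that]
    by (simp add: curv_S3_def T_def[symmetric] norm_eq_sqrt_inner) (metis mult.assoc real_sqrt_mult real_sqrt_mult_self)
  obtain s0 where s0: "s0 \<in> I" "covD_S3 \<gamma> T s0 \<noteq> 0" using ng by (auto simp: T_def)
  define k where "k = \<bar>q\<bar> * sqrt c"
  have "curv_S3 \<gamma> s0 \<noteq> 0" using s0 by (simp add: curv_S3_def T_def)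
  then have k0: "k \<noteq> 0" using curv[OF s0(1)] by (simp add: k_def)
  have c0: "c > 0" using k0 c[OF s0(1)] by (simp add: k_def) (metis inner_ge_zero order_le_less)
  have kk: "k * k = q * q * c" using c0 by (simp add: k_def algebra_simps abs_mult_self_eq)
  have nrm: "normal_S3 \<gamma> s = (q / k) *\<^sub>R W s" if "s \<in> I" for s
    using AW[OF that] curv[OF that] cov[OF that]
    by (simp add: normal_S3_def T_def[symmetric] k_def)
  have dN: "(normal_S3 \<gamma> has_vector_derivative (q / k) *\<^sub>R (q *\<^sub>R X4 a (W s) (\<gamma> s))) (at s)" if "s \<in> I" for s
    by (rule has_vector_derivative_transform_within_open[OF bounded_linear.has_vector_derivative[OF bounded_linear_scaleR_right dW[OF that]] I(1) that])
       (simp add: nrm)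
  show ?thesis
  proof
    show "\<exists>c. \<forall>s\<in>I. curv_S3 \<gamma> s = c" using curv by blast
    show "\<forall>s\<in>I. tors_S3 \<gamma> s = q * (a \<bullet> tang \<gamma> s)"
    proof
      fix s assume s: "s \<in> I"
      have Xg: "X4 a (W s) (\<gamma> s) \<bullet> \<gamma> s = 0" by (simp add: X4_inner det4_alt)
      have Wg: "W s \<bullet> \<gamma> s = 0" "\<gamma> s \<bullet> W s = 0" by (simp_all add: W_def inner_commute[of "\<gamma> s"] X4_inner det4_alt)
      have WT: "W s \<bullet> T s = 0" by (simp add: W_def X4_inner det4_alt)
      have cN: "covD_S3 \<gamma> (normal_S3 \<gamma>) s = (q / k) *\<^sub>R (q *\<^sub>R X4 a (W s) (\<gamma> s))"
        using vector_derivative_at[OF dN[OF s]] Xg by (simp add: covD_S3_def)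
      have "tors_S3 \<gamma> s = ((q / k) *\<^sub>R (q *\<^sub>R X4 a (W s) (\<gamma> s))) \<bullet> X4 (T s) ((q / k) *\<^sub>R W s) (\<gamma> s)"
        using cN nrm[OF s] by (simp add: tors_S3_def binormal_S3_def T_def crossS_eq)
      also have "\<dots> = (q*q*q / (k*k)) * (X4 a (W s) (\<gamma> s) \<bullet> X4 (T s) (W s) (\<gamma> s))"
        by (simp add: X4_lin2)
      also have "\<dots> = (q*q*q / (k*k)) * ((a \<bullet> T s) * c)"
        using c[OF s] Wg WT gg[OF s] gT[OF s] by (simp add: X4_gram)
      also have "\<dots> = q * (a \<bullet> T s)" using kk c0 q by (simp add: field_simps)
      finally show "tors_S3 \<gamma> s = q * (a \<bullet> tang \<gamma> s)" by (simp add: T_def)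
    qed
  qed
qed



lemma lor_bb: "bounded_bilinear lor"
  using lor_bilinear bilinear_conv_bounded_bilinear by blast

lemma X4_lin4: "X4 u (x + p) p = X4 u x p"
  by (simp add: X4_simps algebra_simps)

lemma part3:
  fixes \<gamma> :: "real \<Rightarrow> real^4" and a :: "real^4"
  assumes q: "q \<noteq> 0" and I: "open I" "is_interval I" and us: "unit_speed_H3 I \<gamma>"
    and ng: "\<not> (\<forall>s\<in>I. covD_H3 \<gamma> (tang \<gamma>) s = 0)"
    and ct: "conf_traj_H3 q (\<lambda>p. a + lor a p *\<^sub>R p) I \<gamma>"
  shows "(\<exists>c. \<forall>s\<in>I. curv_H3 \<gamma> s = c) \<and> (\<forall>s\<in>I. tors_H3 \<gamma> s = q * lor a (tang \<gamma> s))"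
proof -
  define T where "T = tang \<gamma>"
  define A where "A s = vector_derivative T (at s)" for s
  define W where "W s = Jm (X4 a (T s) (\<gamma> s))" for s
  define Y where "Y s = X4 a (W s) (\<gamma> s)" for s
  have sm: "smooth_curve_on I \<gamma>" using us by (simp add: unit_speed_H3_def)
  have dg: "(\<gamma> has_vector_derivative T s) (at s)" if "s \<in> I" for s
    using smooth_derivs[OF sm I(1) that] by (simp add: T_def)
  have dT: "(T has_vector_derivative A s) (at s)" if "s \<in> I" for s
    using smooth_derivs[OF sm I(1) that] by (simp add: T_def A_def)
  have gg: "lor (\<gamma> s) (\<gamma> s) = -1" if "s \<in> I" for s
    using us that by (simp add: unit_speed_H3_def H3_def)
  have TT: "lor (T s) (T s) = 1" if "s \<in> I" for s
    using us that by (simp add: unit_speed_H3_def T_def)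
  have gT: "lor (\<gamma> s) (T s) = 0" if "s \<in> I" for s
  proof -
    have "((\<lambda>s. lor (\<gamma> s) (\<gamma> s)) has_vector_derivative (lor (\<gamma> s) (T s) + lor (T s) (\<gamma> s))) (at s)"
      by (rule bounded_bilinear.has_vector_derivative[OF lor_bb dg[OF that] dg[OF that]])
    from deriv_zero_if_const[OF this I(1) that gg] show ?thesis by (simp add: lor_comm[of "T s"])
  qed
  have gA: "lor (\<gamma> s) (A s) = -1" if "s \<in> I" for s
  proof -
    have "((\<lambda>s. lor (\<gamma> s) (T s)) has_vector_derivative (lor (\<gamma> s) (A s) + lor (T s) (T s))) (at s)"
      by (rule bounded_bilinear.has_vector_derivative[OF lor_bb dg[OF that] dT[OF that]])
    from deriv_zero_if_const[OF this I(1) that gT] show ?thesis using TT[OF that] by simp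
  qed
  have cov: "covD_H3 \<gamma> T s = A s - \<gamma> s" if "s \<in> I" for s
    using gA[OF that] by (simp add: covD_H3_def A_def lor_comm[of _ "\<gamma> s"])
  have AW: "A s - \<gamma> s = q *\<^sub>R W s" if "s \<in> I" for s
    using ct that cov[OF that] gg[OF that] by (simp add: conf_traj_H3_def T_def W_def crossH_eq X4_shift1)
  have AW2: "A s = q *\<^sub>R W s + \<gamma> s" if "s \<in> I" for s
    using AW[OF that] by (simp add: algebra_simps)
  have dW: "(W has_vector_derivative q *\<^sub>R Jm (Y s)) (at s)" if "s \<in> I" for s
  proof -
    have "((\<lambda>s. X4 a (T s) (\<gamma> s)) has_vector_derivative (X4 a (T s) (T s) + X4 a (A s) (\<gamma> s))) (at s)"
      by (rule bounded_bilinear.has_vector_derivative[OF X4_bb dT[OF that] dg[OF that]])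
    then have "(W has_vector_derivative Jm (X4 a (T s) (T s) + X4 a (A s) (\<gamma> s))) (at s)"
      unfolding W_def by (rule bounded_linear.has_vector_derivative[OF Jm_bl])
    then show ?thesis using AW2[OF that] by (simp add: X4_same X4_lin2 X4_lin4 Jm_lin Y_def)
  qed
  have WY: "lor (W s) (Jm (Y s)) = 0" for s
    by (simp add: lor_comm[of "W s"] lor_Jm Y_def X4_inner det4_alt)
  have dWW: "((\<lambda>s. lor (W s) (W s)) has_vector_derivative 0) (at s)" if "s \<in> I" for s
  proof -
    have "((\<lambda>s. lor (W s) (W s)) has_vector_derivative (lor (W s) (q *\<^sub>R Jm (Y s)) + lor (q *\<^sub>R Jm (Y s)) (W s))) (at s)"
      by (rule bounded_bilinear.has_vector_derivative[OF lor_bb dW[OF that] dW[OF that]])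
    then show ?thesis using WY[of s] by (simp add: lor_simps lor_comm[of _ "W s"])
  qed
  obtain c where c: "\<And>s. s \<in> I \<Longrightarrow> lor (W s) (W s) = c"
    using const_if_deriv_zero[OF I(2) dWW] by blast
  define k where "k = sqrt (q * q * c)"
  have curv: "curv_H3 \<gamma> s = k" if "s \<in> I" for s
    using AW[OF that] c[OF that] cov[OF that]
    by (simp add: curv_H3_def T_def[symmetric] k_def lor_simps)
  have Wg: "lor (W s) (\<gamma> s) = 0" "lor (\<gamma> s) (W s) = 0" for s
    by (simp_all add: W_def lor_comm[of "\<gamma> s"] lor_Jm X4_inner det4_alt)
  obtain s0 where s0: "s0 \<in> I" "covD_H3 \<gamma> T s0 \<noteq> 0" using ng by (auto simp: T_def)
  have "lor (covD_H3 \<gamma> T s0) (\<gamma> s0) = 0"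
    using cov[OF s0(1)] AW[OF s0(1)] Wg by (simp add: lor_simps)
  from spacelike[OF this gg[OF s0(1)] s0(2)]
  have pos: "q * q * c > 0"
    using cov[OF s0(1)] AW[OF s0(1)] c[OF s0(1)] by (simp add: lor_simps)
  then have c0: "c > 0" by (simp add: zero_less_mult_iff)
  have k0: "k > 0" using pos by (simp add: k_def)
  have kk: "k * k = q * q * c" using pos by (simp add: k_def)
  have nrm: "normal_H3 \<gamma> s = (q / k) *\<^sub>R W s" if "s \<in> I" for s
    using AW[OF that] curv[OF that] cov[OF that]
    by (simp add: normal_H3_def T_def[symmetric])
  have dN: "(normal_H3 \<gamma> has_vector_derivative (q / k) *\<^sub>R (q *\<^sub>R Jm (Y s))) (at s)" if "s \<in> I" for s
    by (rule has_vector_derivative_transform_within_open[OF bounded_linear.has_vector_derivative[OF bounded_linear_scaleR_right dW[OF that]] I(1) that])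
       (simp add: nrm)
  show ?thesis
  proof
    show "\<exists>c. \<forall>s\<in>I. curv_H3 \<gamma> s = c" using curv by blast
    show "\<forall>s\<in>I. tors_H3 \<gamma> s = q * lor a (tang \<gamma> s)"
    proof
      fix s assume s: "s \<in> I"
      have Yg: "lor (Jm (Y s)) (\<gamma> s) = 0" by (simp add: lor_Jm Y_def X4_inner det4_alt)
      have WT: "lor (W s) (T s) = 0" by (simp add: W_def lor_Jm X4_inner det4_alt)
      have cN: "covD_H3 \<gamma> (normal_H3 \<gamma>) s = (q / k) *\<^sub>R (q *\<^sub>R Jm (Y s))"
        using vector_derivative_at[OF dN[OF s]] Yg by (simp add: covD_H3_def lor_simps)
      have "tors_H3 \<gamma> s = lor ((q / k) *\<^sub>R (q *\<^sub>R Jm (Y s))) (Jm (X4 (T s) ((q / k) *\<^sub>R W s) (\<gamma> s)))"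
        using cN nrm[OF s] gg[OF s] by (simp add: tors_H3_def binormal_H3_def T_def crossH_eq)
      also have "\<dots> = (q*q*q / (k*k)) * lor (Y s) (X4 (T s) (W s) (\<gamma> s))"
        by (simp add: X4_lin2 Jm_lin lor_simps lor_Jm(2))
      also have "\<dots> = (q*q*q / (k*k)) * (lor a (T s) * c)"
        using c[OF s] Wg WT gg[OF s] gT[OF s] by (simp add: X4_lgram Y_def lor_comm[of "T s"])
      also have "\<dots> = q * lor a (T s)" using kk c0 q by (simp add: field_simps)
      finally show "tors_H3 \<gamma> s = q * lor a (tang \<gamma> s)" by (simp add: T_def)
    qed
  qed
qed


theorem mainTheorem3:
  fixes q :: real and I :: "real set"
  assumes "q \<noteq> 0" and "open I" and "is_interval I"
  shows
   "(\<forall>\<gamma> :: real \<Rightarrow> real^3.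
       unit_speed_R3 I \<gamma> \<and> \<not> (\<forall>s\<in>I. covD_R3 (tang \<gamma>) s = 0) \<and>
       conf_traj_R3 q (\<lambda>p. p) I \<gamma>
       \<longrightarrow> (\<exists>c. \<forall>s\<in>I. curv_R3 \<gamma> s = c) \<and>
           (\<forall>s\<in>I. tors_R3 \<gamma> s = q * (\<gamma> s \<bullet> tang \<gamma> s)))
  \<and> (\<forall>(a :: real^4) (\<gamma> :: real \<Rightarrow> real^4).
       a \<noteq> 0 \<and> unit_speed_S3 I \<gamma> \<and> \<not> (\<forall>s\<in>I. covD_S3 \<gamma> (tang \<gamma>) s = 0) \<and>
       conf_traj_S3 q (\<lambda>p. a - (a \<bullet> p) *\<^sub>R p) I \<gamma>
       \<longrightarrow> (\<exists>c. \<forall>s\<in>I. curv_S3 \<gamma> s = c) \<and>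
           (\<forall>s\<in>I. tors_S3 \<gamma> s = q * (a \<bullet> tang \<gamma> s)))
  \<and> (\<forall>(a :: real^4) (\<gamma> :: real \<Rightarrow> real^4).
       a \<noteq> 0 \<and> unit_speed_H3 I \<gamma> \<and> \<not> (\<forall>s\<in>I. covD_H3 \<gamma> (tang \<gamma>) s = 0) \<and>
       conf_traj_H3 q (\<lambda>p. a + lor a p *\<^sub>R p) I \<gamma>
       \<longrightarrow> (\<exists>c. \<forall>s\<in>I. curv_H3 \<gamma> s = c) \<and>
           (\<forall>s\<in>I. tors_H3 \<gamma> s = q * lor a (tang \<gamma> s)))"
proof (intro conjI)
  show "\<forall>\<gamma> :: real \<Rightarrow> real^3.
       unit_speed_R3 I \<gamma> \<and> \<not> (\<forall>s\<in>I. covD_R3 (tang \<gamma>) s = 0) \<and>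
       conf_traj_R3 q (\<lambda>p. p) I \<gamma>
       \<longrightarrow> (\<exists>c. \<forall>s\<in>I. curv_R3 \<gamma> s = c) \<and>
           (\<forall>s\<in>I. tors_R3 \<gamma> s = q * (\<gamma> s \<bullet> tang \<gamma> s))"
    using part1[OF assms] by (intro allI impI) (elim conjE, assumption)
next
  show "\<forall>(a :: real^4) (\<gamma> :: real \<Rightarrow> real^4).
       a \<noteq> 0 \<and> unit_speed_S3 I \<gamma> \<and> \<not> (\<forall>s\<in>I. covD_S3 \<gamma> (tang \<gamma>) s = 0) \<and>
       conf_traj_S3 q (\<lambda>p. a - (a \<bullet> p) *\<^sub>R p) I \<gamma>
       \<longrightarrow> (\<exists>c. \<forall>s\<in>I. curv_S3 \<gamma> s = c) \<and>
           (\<forall>s\<in>I. tors_S3 \<gamma> s = q * (a \<bullet> tang \<gamma> s))"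
    using part2[OF assms] by (intro allI impI) (elim conjE, assumption)
next
  show "\<forall>(a :: real^4) (\<gamma> :: real \<Rightarrow> real^4).
       a \<noteq> 0 \<and> unit_speed_H3 I \<gamma> \<and> \<not> (\<forall>s\<in>I. covD_H3 \<gamma> (tang \<gamma>) s = 0) \<and>
       conf_traj_H3 q (\<lambda>p. a + lor a p *\<^sub>R p) I \<gamma>
       \<longrightarrow> (\<exists>c. \<forall>s\<in>I. curv_H3 \<gamma> s = c) \<and>
           (\<forall>s\<in>I. tors_H3 \<gamma> s = q * lor a (tang \<gamma> s))"
    using part3[OF assms] by (intro allI impI) (elim conjE, assumption)
qed

end
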